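(* Let $f,\hat f:M^2\to\mathbb{R}^3=\operatorname{Im}\mathbb{H}$ be non-flat conformal minimal immersions forming a Darboux pair, with $\hat f$ a Darboux transform of $f$ with parameter $t\in\mathbb{R}\setminus\{0\}$ with respect to the Christoffel dual $f^*=n$, where $n$ is the Gauss map of $f$, and let $\hat n=-(\hat f-f)^{-1}n(\hat f-f)$ be the Gauss map of $\hat f$. Then, up to translation, $$\hat f=f+\tfrac1t(\hat n-n)^{-1}.$$
   Context: $\mathbb{R}^3$ is identified with $\operatorname{Im}\mathbb{H}$ with product $xy=-\langle x,y\rangle+x\times y$ and $x^{-1}=-x/|x|^2$. The Gauss map $n$ of a minimal surface is a Christoffel dual of $f$ (Christoffel dual: locally, up to homothety and translation, a solution of $df^*=-\frac1E(f_udu-f_vdv)$ in conformal curvature line coordinates with metric $E(du^2+dv^2)$). A Darboux transform with parameter $t$ with respect to $f^*$ is a solution $\hat f$ of $d\hat f=t(\hat f-f)\,df^*(\hat f-f)$. A Darboux pair is a pair of surfaces enveloping a common 2-sphere congruence (first order contact at corresponding points), with commuting shape operators and conformally equivalent induced metrics. *)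

theory Defs
  imports "HOL-Analysis.Analysis"
begin

text \<open>Surfaces are parametrised locally on an open connected domain U of R^2
  (coordinates (u,v), type real \<times> real) with values in R^3 = Im H (type real^3).
  Quaternions H are modelled as pairs (real part, imaginary part).\<close>

type_synonym quat = "real \<times> (real^3)"

definition qmult :: "quat \<Rightarrow> quat \<Rightarrow> quat" where
  "qmult x y = (fst x * fst y - inner (snd x) (snd y),
                fst x *\<^sub>R snd y + fst y *\<^sub>R snd x + cross3 (snd x) (snd y))"

definition Imq :: "real^3 \<Rightarrow> quat" where
  "Imq x = (0, x)"

definition iinv :: "real^3 \<Rightarrow> real^3" where
  "iinv x = - ((1 / (norm x)^2) *\<^sub>R x)"

definition pu :: "(real \<times> real \<Rightarrow> 'a::real_normed_vector) \<Rightarrow> real \<times> real \<Rightarrow> 'a" where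
  "pu f p = frechet_derivative f (at p) (1, 0)"

definition pv :: "(real \<times> real \<Rightarrow> 'a::real_normed_vector) \<Rightarrow> real \<times> real \<Rightarrow> 'a" where
  "pv f p = frechet_derivative f (at p) (0, 1)"

definition C2_on :: "(real \<times> real) set \<Rightarrow> (real \<times> real \<Rightarrow> real^3) \<Rightarrow> bool" where
  "C2_on U f \<longleftrightarrow> f differentiable_on U \<and> pu f differentiable_on U \<and> pv f differentiable_on U
     \<and> continuous_on U (pu (pu f)) \<and> continuous_on U (pv (pu f))
     \<and> continuous_on U (pu (pv f)) \<and> continuous_on U (pv (pv f))"

definition immersion_on :: "(real \<times> real) set \<Rightarrow> (real \<times> real \<Rightarrow> real^3) \<Rightarrow> bool" where
  "immersion_on U f \<longleftrightarrow> C2_on U f \<and> (\<forall>p\<in>U. cross3 (pu f p) (pv f p) \<noteq> 0)"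

definition conformal_on :: "(real \<times> real) set \<Rightarrow> (real \<times> real \<Rightarrow> real^3) \<Rightarrow> bool" where
  "conformal_on U f \<longleftrightarrow> (\<forall>p\<in>U. inner (pu f p) (pu f p) = inner (pv f p) (pv f p)
                                 \<and> inner (pu f p) (pv f p) = 0)"

definition gauss_map :: "(real \<times> real \<Rightarrow> real^3) \<Rightarrow> real \<times> real \<Rightarrow> real^3" where
  "gauss_map f p = (1 / norm (cross3 (pu f p) (pv f p))) *\<^sub>R cross3 (pu f p) (pv f p)"

definition fE where "fE f p = inner (pu f p) (pu f p)"
definition fF where "fF f p = inner (pu f p) (pv f p)"
definition fG where "fG f p = inner (pv f p) (pv f p)"
definition sL where "sL f p = inner (pu (pu f) p) (gauss_map f p)"
definition sM where "sM f p = inner (pv (pu f) p) (gauss_map f p)"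
definition sN where "sN f p = inner (pv (pv f) p) (gauss_map f p)"

definition mean_curvature :: "(real \<times> real \<Rightarrow> real^3) \<Rightarrow> real \<times> real \<Rightarrow> real" where
  "mean_curvature f p = (sL f p * fG f p - 2 * sM f p * fF f p + sN f p * fE f p)
                         / (2 * (fE f p * fG f p - (fF f p)^2))"

definition gauss_curvature :: "(real \<times> real \<Rightarrow> real^3) \<Rightarrow> real \<times> real \<Rightarrow> real" where
  "gauss_curvature f p = (sL f p * sN f p - (sM f p)^2) / (fE f p * fG f p - (fF f p)^2)"

definition minimal_on :: "(real \<times> real) set \<Rightarrow> (real \<times> real \<Rightarrow> real^3) \<Rightarrow> bool" where
  "minimal_on U f \<longleftrightarrow> (\<forall>p\<in>U. mean_curvature f p = 0)"

definition nonflat_on :: "(real \<times> real) set \<Rightarrow> (real \<times> real \<Rightarrow> real^3) \<Rightarrow> bool" where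
  "nonflat_on U f \<longleftrightarrow> (\<exists>p\<in>U. gauss_curvature f p \<noteq> 0)"

definition darboux_transform ::
  "(real \<times> real) set \<Rightarrow> (real \<times> real \<Rightarrow> real^3) \<Rightarrow> (real \<times> real \<Rightarrow> real^3) \<Rightarrow> real
     \<Rightarrow> (real \<times> real \<Rightarrow> real^3) \<Rightarrow> bool" where
  "darboux_transform U f fs t hf \<longleftrightarrow>
     (\<forall>p\<in>U. hf differentiable (at p) \<and> fs differentiable (at p) \<and>
        (\<forall>w. Imq (frechet_derivative hf (at p) w)
              = t *\<^sub>R qmult (qmult (Imq (hf p - f p)) (Imq (frechet_derivative fs (at p) w)))
                             (Imq (hf p - f p))))"

text \<open>Darboux pair: (i) f and hf envelope a common (smooth) 2-sphere congruence
  {x. a |x|^2 - 2 <b,x> + c = 0} (|b|^2 - a c > 0; a = 0 gives planes) with first order contact,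
  i.e. the point lies on the sphere and the sphere normal a x - b is parallel to the surface normal;
  (ii) commuting shape operators; (iii) conformally equivalent induced metrics.\<close>
definition envelopes_sphere :: "real \<Rightarrow> real^3 \<Rightarrow> real \<Rightarrow> real^3 \<Rightarrow> real^3 \<Rightarrow> bool" where
  "envelopes_sphere a b c x nrm \<longleftrightarrow>
     a * (norm x)^2 - 2 * inner b x + c = 0 \<and> cross3 (a *\<^sub>R x - b) nrm = 0"

definition shape_operators_commute ::
  "(real \<times> real \<Rightarrow> real^3) \<Rightarrow> (real \<times> real \<Rightarrow> real^3) \<Rightarrow> real \<times> real \<Rightarrow> bool" where
  "shape_operators_commute f hf p \<longleftrightarrow>
     (\<forall>A B :: real \<times> real \<Rightarrow> real \<times> real. linear A \<and> linear B \<and>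
        (\<forall>w. frechet_derivative (gauss_map f) (at p) w = - frechet_derivative f (at p) (A w)) \<and>
        (\<forall>w. frechet_derivative (gauss_map hf) (at p) w = - frechet_derivative hf (at p) (B w))
        \<longrightarrow> A \<circ> B = B \<circ> A)"

definition darboux_pair ::
  "(real \<times> real) set \<Rightarrow> (real \<times> real \<Rightarrow> real^3) \<Rightarrow> (real \<times> real \<Rightarrow> real^3) \<Rightarrow> bool" where
  "darboux_pair U f hf \<longleftrightarrow>
     (\<exists>a b c. a differentiable_on U \<and> b differentiable_on U \<and> c differentiable_on U \<and>
        (\<forall>p\<in>U. inner (b p) (b p) - a p * c p > 0 \<and>
                envelopes_sphere (a p) (b p) (c p) (f p) (gauss_map f p) \<and>
                envelopes_sphere (a p) (b p) (c p) (hf p) (gauss_map hf p))) \<and>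
     (\<forall>p\<in>U. shape_operators_commute f hf p) \<and>
     (\<exists>lam. \<forall>p\<in>U. lam p > 0 \<and> (\<forall>w w'.
        inner (frechet_derivative hf (at p) w) (frechet_derivative hf (at p) w')
        = lam p * inner (frechet_derivative f (at p) w) (frechet_derivative f (at p) w')))"

end

theory Submission
  imports Defs
begin


lemma lin2:
  fixes L :: "real \<times> real \<Rightarrow> 'a::real_vector"
  assumes "linear L" shows "L w = fst w *\<^sub>R L (1,0) + snd w *\<^sub>R L (0,1)"
proof -
  have e: "w = fst w *\<^sub>R (1,0) + snd w *\<^sub>R (0,1)" by (simp add: prod_eq_iff)
  have "L w = L (fst w *\<^sub>R (1,0) + snd w *\<^sub>R (0,1))" by (subst e[symmetric]) (rule refl)
  also have "\<dots> = fst w *\<^sub>R L (1,0) + snd w *\<^sub>R L (0,1)"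
    by (simp only: linear_add[OF assms] linear_scale[OF assms])
  finally show ?thesis .
qed

lemma deriv_const_zero:
  assumes "open U" "p \<in> U" "\<forall>x\<in>U. F x = c" "(F has_derivative F') (at p)"
  shows "F' w = 0"
proof -
  have "((\<lambda>x. c) has_derivative (\<lambda>h. 0)) (at p)" by simp
  then have "(F has_derivative (\<lambda>h. 0)) (at p)"
    by (rule has_derivative_transform_within_open[OF _ assms(1,2)]) (use assms(3) in auto)
  then have "F' = (\<lambda>h. 0)" using assms(4) has_derivative_unique by blast
  then show ?thesis by simp
qed

lemma qsand:
  "snd (qmult (qmult (Imq a) (Imq b)) (Imq c)) = (- inner a b) *\<^sub>R c + cross3 (cross3 a b) c"
  by (simp add: qmult_def Imq_def)

lemma qsand2:
  "snd (qmult (qmult (Imq g) (Imq v)) (Imq g)) = inner g g *\<^sub>R v - (2 * inner g v) *\<^sub>R g"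
proof -
  have "cross3 (cross3 g v) g = - cross3 g (cross3 g v)" by (rule cross_skew)
  also have "\<dots> = inner g g *\<^sub>R v - inner g v *\<^sub>R g" by (simp add: Lagrange)
  finally have e: "cross3 (cross3 g v) g = inner g g *\<^sub>R v - inner g v *\<^sub>R g" .
  have "(2 * inner g v) *\<^sub>R g = inner g v *\<^sub>R g + inner g v *\<^sub>R g"
    by (simp add: scaleR_left_distrib[symmetric])
  then show ?thesis by (simp add: qsand e algebra_simps)
qed

lemma bb_cross: "bounded_bilinear cross3"
  using bilinear_cross bilinear_conv_bounded_bilinear by blast

lemma cross_diff:
  assumes "a differentiable (at p)" "b differentiable (at p)"
  shows "(\<lambda>x. cross3 (a x) (b x)) differentiable (at p)"
  using assms unfolding differentiable_def
  by (blast intro: bounded_bilinear.FDERIV[OF bb_cross])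

lemma unit_diff:
  fixes c :: "real \<times> real \<Rightarrow> real^3"
  assumes "c differentiable (at p)" "c p \<noteq> 0"
  shows "(\<lambda>x. (1 / norm (c x)) *\<^sub>R c x) differentiable (at p)"
proof -
  have "(\<lambda>x. norm (c x)) differentiable (at p)"
    using differentiable_compose[of norm c p] assms by simp
  then have "(\<lambda>x. 1 / norm (c x)) differentiable (at p)"
    using assms by (intro differentiable_divide) auto
  then show ?thesis using assms(1) by (intro differentiable_scaleR)
qed

lemma perp_parallel:
  fixes x a b :: "real^3"
  assumes "inner x a = 0" "inner x b = 0" "cross3 a b \<noteq> 0"
  shows "x = (inner (cross3 a b) x / inner (cross3 a b) (cross3 a b)) *\<^sub>R cross3 a b"
proof -
  let ?c = "cross3 a b"
  have "cross3 x ?c = 0" using assms by (simp add: Lagrange)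
  then have "cross3 ?c x = 0" by (metis cross_skew neg_equal_0_iff_equal)
  then have "cross3 ?c (cross3 ?c x) = 0" by simp
  then have eq: "inner ?c x *\<^sub>R ?c = inner ?c ?c *\<^sub>R x" by (simp add: Lagrange)
  have nz: "inner ?c ?c \<noteq> 0" using assms(3) by simp
  have "x = (1 / inner ?c ?c) *\<^sub>R (inner ?c ?c *\<^sub>R x)" using nz by simp
  also have "\<dots> = (1 / inner ?c ?c) *\<^sub>R (inner ?c x *\<^sub>R ?c)" by (simp only: eq)
  also have "\<dots> = (inner ?c x / inner ?c ?c) *\<^sub>R ?c" by simp
  finally show ?thesis .
qed


lemma key_alg2:
 fixes g n v d :: "real^3"
 assumes vn: "inner v n = 0" and dn: "inner d n = 0" and nn: "inner n n = 1" and gg: "inner g g \<noteq> 0"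
 shows "inner (t *\<^sub>R (inner g g *\<^sub>R v - (2*inner g v) *\<^sub>R g))
          (v - ((2 * inner g n / inner g g) *\<^sub>R (t *\<^sub>R (inner g g *\<^sub>R v - (2*inner g v) *\<^sub>R g) - d)
           + (((2 * (inner g v + inner (t *\<^sub>R (inner g g *\<^sub>R v - (2*inner g v) *\<^sub>R g) - d) n)) * inner g g
              - 2 * inner g n * (inner g (t *\<^sub>R (inner g g *\<^sub>R v - (2*inner g v) *\<^sub>R g) - d)
                + inner (t *\<^sub>R (inner g g *\<^sub>R v - (2*inner g v) *\<^sub>R g) - d) g)) / (inner g g * inner g g)) *\<^sub>R g))
      = t*inner g g*((1 - 2*t*inner g n) * inner v v) + 2*t*inner g n*inner v d"
proof -
  have vn': "inner n v = 0" "inner n d = 0" using vn dn by (simp_all add: inner_commute)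
  show ?thesis using gg
    by (simp add: inner_diff_left inner_diff_right inner_add_left inner_add_right vn dn vn' nn
        inner_commute[of v g] inner_commute[of d g] inner_commute[of n g] inner_commute[of d v] field_simps)
qed



theorem corollary3p3:
  fixes U :: "(real \<times> real) set"
    and f hf n hn :: "real \<times> real \<Rightarrow> real^3"
    and t :: real
  assumes "open U" and "connected U" and "U \<noteq> {}"
    and "immersion_on U f" and "conformal_on U f" and "minimal_on U f" and "nonflat_on U f"
    and "immersion_on U hf" and "conformal_on U hf" and "minimal_on U hf" and "nonflat_on U hf"
    and "darboux_pair U f hf"
    and "t \<noteq> 0"
    and "\<forall>p\<in>U. n p = gauss_map f p"
    and "darboux_transform U f n t hf"
    and "\<forall>p\<in>U. Imq (hn p) = - qmult (qmult (Imq (iinv (hf p - f p))) (Imq (n p))) (Imq (hf p - f p))"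
  shows "\<exists>c. \<forall>p\<in>U. hf p = f p + (1 / t) *\<^sub>R iinv (hn p - n p) + c"
proof -
  note oU = assms(1)
  have imf: "immersion_on U f" and imh: "immersion_on U hf" using assms by auto
  have C2f: "C2_on U f" and C2h: "C2_on U hf" using imf imh by (auto simp: immersion_on_def)
  have crf: "cross3 (pu f p) (pv f p) \<noteq> 0" if "p \<in> U" for p
    using imf that by (auto simp: immersion_on_def)
  have crh: "cross3 (pu hf p) (pv hf p) \<noteq> 0" if "p \<in> U" for p
    using imh that by (auto simp: immersion_on_def)
  have fd: "f differentiable (at p)" "pu f differentiable (at p)" "pv f differentiable (at p)"
    if "p \<in> U" for p
    using C2f that oU by (auto simp: C2_on_def differentiable_on_eq_differentiable_at)
  have hd: "hf differentiable (at p)" "pu hf differentiable (at p)" "pv hf differentiable (at p)"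
    if "p \<in> U" for p
    using C2h that oU by (auto simp: C2_on_def differentiable_on_eq_differentiable_at)
  have nU: "n p = gauss_map f p" if "p \<in> U" for p using assms(14) that by auto
  have nd: "n differentiable (at p)" if "p \<in> U" for p
  proof -
    have "(\<lambda>x. (1 / norm (cross3 (pu f x) (pv f x))) *\<^sub>R cross3 (pu f x) (pv f x)) differentiable (at p)"
      using unit_diff[OF cross_diff[OF fd(2,3)[OF that]] crf[OF that]] .
    then obtain D where "((\<lambda>x. (1 / norm (cross3 (pu f x) (pv f x))) *\<^sub>R cross3 (pu f x) (pv f x)) has_derivative D) (at p)"
      unfolding differentiable_def by blast
    then have "(n has_derivative D) (at p)"
      by (rule has_derivative_transform_within_open[OF _ oU that]) (simp add: nU gauss_map_def)
    then show ?thesis unfolding differentiable_def by blast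
  qed
  have nn: "inner (n x) (n x) = 1" if "x \<in> U" for x
  proof -
    have "norm (cross3 (pu f x) (pv f x)) \<noteq> 0" using crf[OF that] by simp
    then have "norm (n x) = 1" using nU[OF that] by (simp add: gauss_map_def)
    then show ?thesis by (simp add: dot_square_norm)
  qed
  have nfu: "inner (pu f x) (n x) = 0" "inner (pv f x) (n x) = 0" if "x \<in> U" for x
    using nU[OF that] by (simp_all add: gauss_map_def dot_cross_self)
  define g where "g x = hf x - f x" for x
  define k where "k x = inner (g x) (n x)" for x
  define G where "G x = inner (g x) (g x)" for x
  define h where "h x = 1 - 2 * t * k x" for x
  define nh where "nh x = n x - (2 * k x / G x) *\<^sub>R g x" for x
  define Dn where "Dn p = frechet_derivative n (at p)" for p
  define Df where "Df p = frechet_derivative f (at p)" for p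
  define Dh where "Dh p = frechet_derivative hf (at p)" for p
  have hDn: "(n has_derivative Dn p) (at p)" if "p \<in> U" for p
    using nd[OF that] by (simp add: Dn_def frechet_derivative_works)
  have hDf: "(f has_derivative Df p) (at p)" if "p \<in> U" for p
    using fd(1)[OF that] by (simp add: Df_def frechet_derivative_works)
  have hDh: "(hf has_derivative Dh p) (at p)" if "p \<in> U" for p
    using hd(1)[OF that] by (simp add: Dh_def frechet_derivative_works)
  have linDn: "linear (Dn p)" if "p \<in> U" for p
    using has_derivative_bounded_linear[OF hDn[OF that]] bounded_linear.linear by blast
  have linDf: "linear (Df p)" if "p \<in> U" for p
    using has_derivative_bounded_linear[OF hDf[OF that]] bounded_linear.linear by blast
  have puf: "pu f p = Df p (1,0)" "pv f p = Df p (0,1)" for p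
    by (simp_all add: pu_def pv_def Df_def)
  have pun: "pu n p = Dn p (1,0)" "pv n p = Dn p (0,1)" for p
    by (simp_all add: pu_def pv_def Dn_def)
  have puh: "pu hf p = Dh p (1,0)" "pv hf p = Dh p (0,1)" for p
    by (simp_all add: pu_def pv_def Dh_def)
  have Dn_perp: "inner (Dn p w) (n p) = 0" if "p \<in> U" for p w
  proof -
    have "((\<lambda>x. inner (n x) (n x)) has_derivative (\<lambda>w. inner (n p) (Dn p w) + inner (Dn p w) (n p))) (at p)"
      by (rule has_derivative_inner[OF hDn[OF that] hDn[OF that]])
    from deriv_const_zero[OF oU that _ this, of 1 w] nn
    show ?thesis by (simp add: inner_commute)
  qed
  have Df_perp: "inner (Df p w) (n p) = 0" if "p \<in> U" for p w
    using lin2[OF linDf[OF that], of w] nfu[OF that] puf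
    by (simp add: inner_add_left)
  have sec_f: "inner (pu (pu f) p) (n p) = - inner (pu f p) (pu n p)"
     "inner (pv (pu f) p) (n p) = - inner (pu f p) (pv n p)"
     "inner (pv (pv f) p) (n p) = - inner (pv f p) (pv n p)" if "p \<in> U" for p
  proof -
    have d1: "(pu f has_derivative frechet_derivative (pu f) (at p)) (at p)"
      using fd(2)[OF that] by (simp add: frechet_derivative_works)
    have d2: "(pv f has_derivative frechet_derivative (pv f) (at p)) (at p)"
      using fd(3)[OF that] by (simp add: frechet_derivative_works)
    have "((\<lambda>x. inner (pu f x) (n x)) has_derivative
        (\<lambda>w. inner (pu f p) (Dn p w) + inner (frechet_derivative (pu f) (at p) w) (n p))) (at p)"
      by (rule has_derivative_inner[OF d1 hDn[OF that]])
    from deriv_const_zero[OF oU that _ this, of 0] nfu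
    have e1: "inner (pu f p) (Dn p w) + inner (frechet_derivative (pu f) (at p) w) (n p) = 0" for w
      by auto
    have "((\<lambda>x. inner (pv f x) (n x)) has_derivative
        (\<lambda>w. inner (pv f p) (Dn p w) + inner (frechet_derivative (pv f) (at p) w) (n p))) (at p)"
      by (rule has_derivative_inner[OF d2 hDn[OF that]])
    from deriv_const_zero[OF oU that _ this, of 0] nfu
    have e2: "inner (pv f p) (Dn p w) + inner (frechet_derivative (pv f) (at p) w) (n p) = 0" for w
      by auto
    show "inner (pu (pu f) p) (n p) = - inner (pu f p) (pu n p)"
      using e1[of "(1,0)"] by (simp add: pu_def[of "pu f"] pun)
    show "inner (pv (pu f) p) (n p) = - inner (pu f p) (pv n p)"
      using e1[of "(0,1)"] by (simp add: pv_def[of "pu f"] pun)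
    show "inner (pv (pv f) p) (n p) = - inner (pv f p) (pv n p)"
      using e2[of "(0,1)"] by (simp add: pv_def[of "pv f"] pun)
  qed
  have Dh_eq: "Dh p w = t *\<^sub>R (G p *\<^sub>R Dn p w - (2 * inner (g p) (Dn p w)) *\<^sub>R g p)"
    if "p \<in> U" for p w
  proof -
    have "Imq (Dh p w) = t *\<^sub>R qmult (qmult (Imq (g p)) (Imq (Dn p w))) (Imq (g p))"
      using assms(15) that unfolding darboux_transform_def Dh_def Dn_def g_def by blast
    then have "snd (Imq (Dh p w)) = t *\<^sub>R snd (qmult (qmult (Imq (g p)) (Imq (Dn p w))) (Imq (g p)))"
      by simp
    then show ?thesis using qsand2[of "g p" "Dn p w"] by (simp add: G_def Imq_def)
  qed
  have Gnz: "G p \<noteq> 0" if "p \<in> U" for p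
  proof
    assume "G p = 0"
    then have "g p = 0" by (simp add: G_def)
    then have "pu hf p = 0" using Dh_eq[OF that] puh \<open>G p = 0\<close> by simp
    then show False using crh[OF that] by simp
  qed
  have Dh_nh: "inner (Dh p w) (nh p) = 0" if "p \<in> U" for p w
  proof -
    have "inner (Dn p w) (n p) = 0" using Dn_perp[OF that] .
    then show ?thesis using Gnz[OF that]
      by (simp add: Dh_eq[OF that] nh_def k_def G_def inner_diff_left inner_diff_right
          inner_commute[of "Dn p w" "g p"] inner_commute[of "n p" "g p"] field_simps)
  qed
  have pu_nh: "inner (pu hf x) (nh x) = 0" "inner (pv hf x) (nh x) = 0" if "x \<in> U" for x
    using Dh_nh[OF that] puh by auto
  define Dg where "Dg p w = Dh p w - Df p w" for p w
  define Dk where "Dk p w = inner (g p) (Dn p w) + inner (Dg p w) (n p)" for p w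
  define DG where "DG p w = inner (g p) (Dg p w) + inner (Dg p w) (g p)" for p w
  define Dq where "Dq p w = ((2 * Dk p w) * G p - 2 * k p * DG p w) / (G p * G p)" for p w
  define DNH where "DNH p w = Dn p w - ((2 * k p / G p) *\<^sub>R Dg p w + Dq p w *\<^sub>R g p)" for p w
  have dg: "(g has_derivative Dg p) (at p)" if "p \<in> U" for p
  proof -
    have geq: "g = (\<lambda>x. hf x - f x)" by (simp add: g_def fun_eq_iff)
    show ?thesis
      unfolding geq Dg_def[abs_def] by (rule has_derivative_diff[OF hDh[OF that] hDf[OF that]])
  qed
  have dk: "(k has_derivative Dk p) (at p)" if "p \<in> U" for p
  proof -
    have keq: "k = (\<lambda>x. inner (g x) (n x))" by (simp add: k_def fun_eq_iff)
    show ?thesis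
      unfolding keq Dk_def[abs_def] by (rule has_derivative_inner[OF dg[OF that] hDn[OF that]])
  qed
  have dnh: "(nh has_derivative DNH p) (at p)" if "p \<in> U" for p
  proof -
    have dg: "(g has_derivative Dg p) (at p)" using dg[OF that] .
    have dk: "(k has_derivative Dk p) (at p)" using dk[OF that] .
    have geq: "g = (\<lambda>x. hf x - f x)" by (simp add: g_def fun_eq_iff)
    have Geq: "G = (\<lambda>x. inner (g x) (g x))" by (simp add: G_def fun_eq_iff)
    have dG: "(G has_derivative DG p) (at p)"
      unfolding Geq DG_def[abs_def] by (rule has_derivative_inner[OF dg dg])
    have dq: "((\<lambda>x. 2 * k x / G x) has_derivative Dq p) (at p)"
      unfolding Dq_def[abs_def] by (rule has_derivative_divide'[OF has_derivative_mult_right[OF dk] dG Gnz[OF that]])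
    have nheq: "nh = (\<lambda>x. n x - (2 * k x / G x) *\<^sub>R g x)" by (simp add: nh_def fun_eq_iff)
    show ?thesis
      unfolding nheq DNH_def[abs_def] by (rule has_derivative_diff[OF hDn[OF that] has_derivative_scaleR[OF dq dg]])
  qed
  have sec_h: "inner (pu (pu hf) p) (nh p) = - inner (pu hf p) (DNH p (1,0))"
     "inner (pv (pv hf) p) (nh p) = - inner (pv hf p) (DNH p (0,1))" if "p \<in> U" for p
  proof -
    have d1: "(pu hf has_derivative frechet_derivative (pu hf) (at p)) (at p)"
      using hd(2)[OF that] by (simp add: frechet_derivative_works)
    have d2: "(pv hf has_derivative frechet_derivative (pv hf) (at p)) (at p)"
      using hd(3)[OF that] by (simp add: frechet_derivative_works)
    have "((\<lambda>x. inner (pu hf x) (nh x)) has_derivative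
        (\<lambda>w. inner (pu hf p) (DNH p w) + inner (frechet_derivative (pu hf) (at p) w) (nh p))) (at p)"
      by (rule has_derivative_inner[OF d1 dnh[OF that]])
    from deriv_const_zero[OF oU that _ this, of 0] pu_nh
    have e1: "inner (pu hf p) (DNH p w) + inner (frechet_derivative (pu hf) (at p) w) (nh p) = 0" for w
      by auto
    have "((\<lambda>x. inner (pv hf x) (nh x)) has_derivative
        (\<lambda>w. inner (pv hf p) (DNH p w) + inner (frechet_derivative (pv hf) (at p) w) (nh p))) (at p)"
      by (rule has_derivative_inner[OF d2 dnh[OF that]])
    from deriv_const_zero[OF oU that _ this, of 0] pu_nh
    have e2: "inner (pv hf p) (DNH p w) + inner (frechet_derivative (pv hf) (at p) w) (nh p) = 0" for w
      by auto
    show "inner (pu (pu hf) p) (nh p) = - inner (pu hf p) (DNH p (1,0))"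
      using e1[of "(1,0)"] by (simp add: pu_def[of "pu hf"])
    show "inner (pv (pv hf) p) (nh p) = - inner (pv hf p) (DNH p (0,1))"
      using e2[of "(0,1)"] by (simp add: pv_def[of "pv hf"])
  qed
  have min_h: "inner (pu (pu hf) p) (nh p) + inner (pv (pv hf) p) (nh p) = 0" if "p \<in> U" for p
  proof -
    let ?c = "cross3 (pu hf p) (pv hf p)"
    have conf: "fE hf p = fG hf p" "fF hf p = 0"
      using assms(9) that by (auto simp: conformal_on_def fE_def fG_def fF_def)
    have "pu hf p \<noteq> 0" using crh[OF that] by auto
    then have Epos: "fE hf p \<noteq> 0" by (simp add: fE_def)
    have "mean_curvature hf p = 0" using assms(10) that by (simp add: minimal_on_def)
    then have "(sL hf p + sN hf p) * fE hf p / (2 * (fE hf p * fE hf p)) = 0"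
      using conf by (simp add: mean_curvature_def algebra_simps)
    then have "sL hf p + sN hf p = 0" using Epos by simp
    then have "inner (pu (pu hf) p + pv (pv hf) p) (gauss_map hf p) = 0"
      by (simp add: sL_def sN_def inner_add_left)
    moreover have "norm ?c \<noteq> 0" using crh[OF that] by simp
    ultimately have V: "inner (pu (pu hf) p + pv (pv hf) p) ?c = 0"
      by (simp add: gauss_map_def)
    have "nh p = (inner ?c (nh p) / inner ?c ?c) *\<^sub>R ?c"
      by (rule perp_parallel) (use pu_nh[OF that] crh[OF that] in \<open>auto simp: inner_commute\<close>)
    then have "inner (pu (pu hf) p + pv (pv hf) p) (nh p) = 0"
      using V by (metis inner_scaleR_right mult_zero_right)
    then show ?thesis by (simp add: inner_add_left)
  qed
  have min_f: "inner (pu f p) (pu n p) + inner (pv f p) (pv n p) = 0" if "p \<in> U" for p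
  proof -
    have conf: "fE f p = fG f p" "fF f p = 0"
      using assms(5) that by (auto simp: conformal_on_def fE_def fG_def fF_def)
    have "pu f p \<noteq> 0" using crf[OF that] by auto
    then have Epos: "fE f p \<noteq> 0" by (simp add: fE_def)
    have "mean_curvature f p = 0" using assms(6) that by (simp add: minimal_on_def)
    then have "(sL f p + sN f p) * fE f p / (2 * (fE f p * fE f p)) = 0"
      using conf by (simp add: mean_curvature_def algebra_simps)
    then have "sL f p + sN f p = 0" using Epos by simp
    then show ?thesis using sec_f[OF that] nU[OF that] by (simp add: sL_def sN_def)
  qed
  have kid: "inner (Dh p w) (DNH p w) = t * G p * ((1 - 2*t*k p) * inner (Dn p w) (Dn p w))
                 + 2 * t * k p * inner (Dn p w) (Df p w)" if "p \<in> U" for p w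
  proof -
    have "inner (Dn p w) (n p) = 0" "inner (Df p w) (n p) = 0" "inner (n p) (n p) = 1" "inner (g p) (g p) \<noteq> 0"
      using Dn_perp[OF that] Df_perp[OF that] nn[OF that] Gnz[OF that] by (auto simp: G_def)
    from key_alg2[OF this, of t]
    show ?thesis unfolding DNH_def Dq_def DG_def Dk_def Dg_def Dh_eq[OF that] G_def k_def .
  qed
  have hkey: "h p * (inner (pu n p) (pu n p) + inner (pv n p) (pv n p)) = 0" if "p \<in> U" for p
  proof -
    have "inner (Dh p (1,0)) (DNH p (1,0)) + inner (Dh p (0,1)) (DNH p (0,1)) = 0"
      using min_h[OF that] sec_h[OF that] puh by simp
    then have "t * G p * ((1 - 2*t*k p) * (inner (pu n p) (pu n p) + inner (pv n p) (pv n p)))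
        + 2 * t * k p * (inner (pu n p) (pu f p) + inner (pv n p) (pv f p)) = 0"
      by (simp add: kid[OF that] pun puf algebra_simps)
    moreover have "inner (pu n p) (pu f p) + inner (pv n p) (pv f p) = 0"
      using min_f[OF that] by (simp add: inner_commute)
    ultimately have "t * G p * ((1 - 2*t*k p) * (inner (pu n p) (pu n p) + inner (pv n p) (pv n p))) = 0"
      by simp
    then show ?thesis using assms(13) Gnz[OF that] by (simp add: h_def)
  qed
  have dh: "(h has_derivative (\<lambda>w. 0 - 2 * t * Dk p w)) (at p)" if "p \<in> U" for p
  proof -
    have heq: "h = (\<lambda>x. 1 - 2 * t * k x)" by (simp add: h_def fun_eq_iff)
    show ?thesis unfolding heq
      by (rule has_derivative_diff[OF has_derivative_const has_derivative_mult_right[OF dk[OF that]]])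
  qed
  have hcont: "isCont h p" if "p \<in> U" for p
    using dh[OF that] has_derivative_continuous by blast
  have hcontU: "continuous_on U h" using hcont continuous_at_imp_continuous_on by blast
  have dh0: "(h has_derivative (\<lambda>w. 0)) (at p)" if "p \<in> U" "h p \<noteq> 0" for p
  proof -
    have "inner (pu n p) (pu n p) + inner (pv n p) (pv n p) = 0" using hkey[OF that(1)] that(2) by simp
    then have "pu n p = 0" "pv n p = 0"
      by (metis add_nonneg_eq_0_iff inner_ge_zero inner_eq_zero_iff)+
    then have Dn0: "Dn p w = 0" for w using lin2[OF linDn[OF that(1)], of w] pun by simp
    have "Dk p w = 0" for w
      using Dh_eq[OF that(1), of w] Dn0[of w] Df_perp[OF that(1), of w]
      by (simp add: Dk_def Dg_def inner_diff_left)
    then show ?thesis using dh[OF that(1)] by simp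
  qed
  obtain p0 where p0: "p0 \<in> U" "gauss_curvature f p0 \<noteq> 0" using assms(7) by (auto simp: nonflat_on_def)
  have hp0: "h p0 = 0"
  proof (rule ccontr)
    assume "h p0 \<noteq> 0"
    then have "inner (pu n p0) (pu n p0) + inner (pv n p0) (pv n p0) = 0" using hkey[OF p0(1)] by simp
    then have "pu n p0 = 0" "pv n p0 = 0"
      by (metis add_nonneg_eq_0_iff inner_ge_zero inner_eq_zero_iff)+
    then have "sL f p0 = 0" "sM f p0 = 0" "sN f p0 = 0"
      using sec_f[OF p0(1)] nU[OF p0(1)] by (simp_all add: sL_def sM_def sN_def)
    then have "gauss_curvature f p0 = 0" by (simp add: gauss_curvature_def)
    then show False using p0(2) by simp
  qed
  have hz: "h x = 0" if "x \<in> U" for x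
  proof (rule ccontr)
    assume hq: "h x \<noteq> 0"
    define S where "S = {y \<in> U. h y = h x}"
    have cl: "closedin (top_of_set U) S" unfolding S_def by (rule continuous_closedin_preimage_constant[OF hcontU])
    have "open S"
      unfolding open_contains_ball
    proof
      fix y assume yS: "y \<in> S"
      then have yU: "y \<in> U" and hy: "h y = h x" by (auto simp: S_def)
      then have hy0: "h y \<noteq> 0" using hq by simp
      obtain e where e: "e > 0" "\<forall>z. dist y z < e \<longrightarrow> h z \<noteq> 0"
        using continuous_at_avoid[OF hcont[OF yU] hy0] by blast
      obtain r where r: "r > 0" "ball y r \<subseteq> U" using oU yU open_contains_ball by blast
      define B where "B = ball y (min e r)"
      have BU: "B \<subseteq> U" using r by (auto simp: B_def)
      have Bh: "h z \<noteq> 0" if "z \<in> B" for z using e(2)[rule_format, of z] that by (simp add: B_def)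
      have "\<exists>c. \<forall>z\<in>B. h z = c"
        by (rule has_derivative_zero_constant[OF convex_ball[of y "min e r", folded B_def]])
           (use BU Bh dh0 in \<open>blast intro: has_derivative_at_withinI\<close>)
      then obtain c where c: "\<forall>z\<in>B. h z = c" by blast
      have "y \<in> B" using e r by (simp add: B_def)
      then have "B \<subseteq> S" using c BU hy by (auto simp: S_def)
      moreover have "min e r > 0" using e r by simp
      ultimately show "\<exists>\<epsilon>>0. ball y \<epsilon> \<subseteq> S" unfolding B_def by blast
    qed
    then have op: "openin (top_of_set U) S" unfolding openin_open by (rule_tac x=S in exI) (auto simp: S_def)
    have "S = {} \<or> S = U" using assms(2) op cl unfolding connected_clopen by blast
    moreover have "x \<in> S" using that by (simp add: S_def)
    ultimately have "S = U" by blast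
    then have "h p0 = h x" using p0(1) by (auto simp: S_def)
    then show False using hp0 hq by simp
  qed
  have "hf p = f p + (1 / t) *\<^sub>R iinv (hn p - n p) + 0" if "p \<in> U" for p
  proof -
    have k2: "2 * t * k p = 1" using hz[OF that] by (simp add: h_def)
    have G: "(norm (g p))\<^sup>2 = G p" by (simp add: G_def power2_norm_eq_inner)
    have cc: "cross3 (cross3 (g p) (n p)) (g p) = G p *\<^sub>R n p - k p *\<^sub>R g p"
    proof -
      have "cross3 (cross3 (g p) (n p)) (g p) = - cross3 (g p) (cross3 (g p) (n p))" by (rule cross_skew)
      also have "\<dots> = G p *\<^sub>R n p - k p *\<^sub>R g p" by (simp add: Lagrange G_def k_def)
      finally show ?thesis .
    qed
    have "Imq (hn p) = - qmult (qmult (Imq (iinv (g p))) (Imq (n p))) (Imq (g p))"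
      using assms(16) that by (simp add: g_def)
    then have "hn p = - snd (qmult (qmult (Imq (iinv (g p))) (Imq (n p))) (Imq (g p)))"
      by (metis Imq_def snd_conv uminus_prod_def)
    also have "\<dots> = - ((- inner (iinv (g p)) (n p)) *\<^sub>R g p + cross3 (cross3 (iinv (g p)) (n p)) (g p))"
      by (simp add: qsand)
    also have "\<dots> = - ((- ((- (1 / G p)) * k p)) *\<^sub>R g p + (- (1 / G p)) *\<^sub>R (G p *\<^sub>R n p - k p *\<^sub>R g p))"
    proof -
      have iv: "iinv (g p) = (- (1 / G p)) *\<^sub>R g p" by (simp add: iinv_def G)
      show ?thesis unfolding iv cross_mult_left cc by (simp add: k_def)
    qed
    also have "\<dots> = n p - (2 * k p / G p) *\<^sub>R g p"
      using Gnz[OF that] by (simp add: algebra_simps scaleR_left_distrib[symmetric] diff_divide_distrib add_divide_distrib)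
    finally have hnp: "hn p = n p - (2 * k p / G p) *\<^sub>R g p" .
    have hd: "hn p - n p = (- 1 / (t * G p)) *\<^sub>R g p"
    proof -
      have "2 * k p / G p = 1 / (t * G p)" using k2 assms(13) Gnz[OF that]
        by (simp add: field_simps)
      then show ?thesis using hnp by simp
    qed
    have "iinv (hn p - n p) = iinv ((- 1 / (t * G p)) *\<^sub>R g p)" by (simp only: hd)
    also have "\<dots> = t *\<^sub>R g p"
      unfolding iinv_def norm_scaleR power_mult_distrib G using assms(13) Gnz[OF that]
      by (simp add: power2_eq_square field_simps)
    finally have "iinv (hn p - n p) = t *\<^sub>R g p" .
    then show ?thesis using assms(13) by (simp add: g_def)
  qed
  then show ?thesis by blast
qed

end
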